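(* Let $\mathcal{S}$ be finite, $\Pi$ irreducible stochastic on $\mathcal{S}$, $\kappa(x,y):=\pi_{xy}-\mathbf{1}_{x=y}$, $\mathcal{K}=\Pi-\mathrm{I}$, $Q=(q(y))$ the invariant distribution, and assume detailed balance $q(y)\kappa(y,z)=q(z)\kappa(z,y)$ for all $y,z$. Let $\boldsymbol{\ell}_t=\ell(t,\cdot)$, $\ell(t,y):=p(t,y)/q(y)$, where $p(t,\cdot)$ is the time-$t$ law of the chain with generator $\mathcal{K}$ started from a positive initial distribution. Fix $t_0>0$, $\varepsilon>0$, a continuous curve $(\psi_t)_{t_0\le t<t_0+\varepsilon}$ of functions $\mathcal{S}\to\mathbb{R}$, and let $\ell^\psi$ solve $\ell^\psi_{t_0}=\boldsymbol{\ell}_{t_0}$, $\partial_t\ell^\psi(t,x)=\sum_y\widehat\kappa(x,y)\psi(t,y)$ with $\widehat\kappa(x,y):=q(y)\kappa(y,x)/q(x)$. Then for every $t\in[t_0,t_0+\varepsilon)$, $$\lim_{h\downarrow0}\frac1h\big\|\boldsymbol{\ell}_{t+h}-\boldsymbol{\ell}_t\big\|_{\mathbb{H}^{-1}(\mathcal{S},Q)}=\big\|\mathcal{K}\boldsymbol{\ell}_t\big\|_{\mathbb{H}^{-1}(\mathcal{S},Q)}=\big\|\boldsymbol{\ell}_t\big\|_{\mathbb{H}^1(\mathcal{S},Q)},$$ and $$\lim_{h\downarrow0}\frac1h\big\|\ell^\psi_{t+h}-\ell^\psi_t\big\|_{\mathbb{H}^{-1}(\mathcal{S},Q)}=\big\|\mathcal{K}\psi_t\big\|_{\mathbb{H}^{-1}(\mathcal{S},Q)}=\big\|\psi_t\big\|_{\mathbb{H}^1(\mathcal{S},Q)}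 .$$
   Context: $\nabla f(x,y):=f(y)-f(x)$; $\mathcal{Z}:=\{(x,y):\kappa(x,y)>0\}$, $c(x,y):=\frac12\kappa(x,y)q(x)$, $\|F\|^2_{\mathbb{L}^2(\mathcal{Z},C)}:=\sum_{(x,y)\in\mathcal{Z}}c(x,y)F(x,y)^2$. $\|f\|_{\mathbb{H}^1(\mathcal{S},Q)}:=\|\nabla f\|_{\mathbb{L}^2(\mathcal{Z},C)}$ (equal to $\mathcal{E}(f,f)^{1/2}$, $\mathcal{E}(f,g):=-\sum_yq(y)f(y)(\mathcal{K}g)(y)$). $\|f\|_{\mathbb{H}^{-1}(\mathcal{S},Q)}:=\|\nabla g\|_{\mathbb{L}^2(\mathcal{Z},C)}$ for any $g$ with $\mathcal{K}g=f$ if $f\in\mathrm{Range}(\mathcal{K})$, and $+\infty$ otherwise. *)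

theory Defs
  imports "HOL-Analysis.Analysis"
begin

definition stochastic :: "('a::finite \<Rightarrow> 'a \<Rightarrow> real) \<Rightarrow> bool" where
  "stochastic P \<longleftrightarrow> (\<forall>x y. P x y \<ge> 0) \<and> (\<forall>x. (\<Sum>y\<in>UNIV. P x y) = 1)"

fun mpow :: "('a::finite \<Rightarrow> 'a \<Rightarrow> real) \<Rightarrow> nat \<Rightarrow> 'a \<Rightarrow> 'a \<Rightarrow> real" where
  "mpow P 0 x y = (if x = y then 1 else 0)"
| "mpow P (Suc n) x y = (\<Sum>z\<in>UNIV. mpow P n x z * P z y)"

definition irreducible_chain :: "('a::finite \<Rightarrow> 'a \<Rightarrow> real) \<Rightarrow> bool" where
  "irreducible_chain P \<longleftrightarrow> (\<forall>x y. \<exists>n. mpow P n x y > 0)"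

definition kappa :: "('a \<Rightarrow> 'a \<Rightarrow> real) \<Rightarrow> 'a \<Rightarrow> 'a \<Rightarrow> real" where
  "kappa P x y = P x y - (if x = y then 1 else 0)"

definition gen :: "('a::finite \<Rightarrow> 'a \<Rightarrow> real) \<Rightarrow> ('a \<Rightarrow> real) \<Rightarrow> 'a \<Rightarrow> real" where
  "gen P g x = (\<Sum>y\<in>UNIV. kappa P x y * g y)"

definition invariant_distribution :: "('a::finite \<Rightarrow> 'a \<Rightarrow> real) \<Rightarrow> ('a \<Rightarrow> real) \<Rightarrow> bool" where
  "invariant_distribution P q \<longleftrightarrow> (\<forall>y. q y \<ge> 0) \<and> (\<Sum>y\<in>UNIV. q y) = 1
      \<and> (\<forall>y. (\<Sum>x\<in>UNIV. q x * P x y) = q y)"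

definition kappa_hat :: "('a \<Rightarrow> 'a \<Rightarrow> real) \<Rightarrow> ('a \<Rightarrow> real) \<Rightarrow> 'a \<Rightarrow> 'a \<Rightarrow> real" where
  "kappa_hat P q x y = q y * kappa P y x / q x"

definition edges :: "('a \<Rightarrow> 'a \<Rightarrow> real) \<Rightarrow> ('a \<times> 'a) set" where
  "edges P = {(x,y). kappa P x y > 0}"

definition cond :: "('a \<Rightarrow> 'a \<Rightarrow> real) \<Rightarrow> ('a \<Rightarrow> real) \<Rightarrow> 'a \<Rightarrow> 'a \<Rightarrow> real" where
  "cond P q x y = kappa P x y * q x / 2"

definition grad :: "('a \<Rightarrow> real) \<Rightarrow> 'a \<Rightarrow> 'a \<Rightarrow> real" where
  "grad f x y = f y - f x"

definition L2C_norm :: "('a::finite \<Rightarrow> 'a \<Rightarrow> real) \<Rightarrow> ('a \<Rightarrow> real) \<Rightarrow> ('a \<Rightarrow> 'a \<Rightarrow> real) \<Rightarrow> real" where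
  "L2C_norm P q F = sqrt (\<Sum>(x,y)\<in>edges P. cond P q x y * (F x y)\<^sup>2)"

definition H1_norm :: "('a::finite \<Rightarrow> 'a \<Rightarrow> real) \<Rightarrow> ('a \<Rightarrow> real) \<Rightarrow> ('a \<Rightarrow> real) \<Rightarrow> real" where
  "H1_norm P q f = L2C_norm P q (grad f)"

definition Hm1_norm :: "('a::finite \<Rightarrow> 'a \<Rightarrow> real) \<Rightarrow> ('a \<Rightarrow> real) \<Rightarrow> ('a \<Rightarrow> real) \<Rightarrow> ereal" where
  "Hm1_norm P q f = (if f \<in> range (gen P) then ereal (L2C_norm P q (grad (SOME g. gen P g = f)))
                     else \<infinity>)"

end

theory Submission
  imports Defs
begin


lemma mpow_nonneg:
  assumes "stochastic P" shows "mpow P n x y \<ge> 0"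
  using assms by (induction n arbitrary: y) (auto simp: stochastic_def intro!: sum_nonneg)

lemma gen_eq:
  "gen P f z = (\<Sum>w\<in>UNIV. P z w * f w) - f z"
proof -
  have "gen P f z = (\<Sum>w\<in>UNIV. P z w * f w - (if z = w then f w else 0))"
    unfolding gen_def kappa_def by (intro sum.cong) (auto simp: algebra_simps)
  also have "\<dots> = (\<Sum>w\<in>UNIV. P z w * f w) - f z"
    by (simp add: sum_subtractf)
  finally show ?thesis .
qed

lemma gen_diff: "gen P (\<lambda>x. a x - b x) z = gen P a z - gen P b z"
  unfolding gen_def by (simp add: right_diff_distrib sum_subtractf)

lemma kernel_const:
  fixes P :: "'a::finite \<Rightarrow> 'a \<Rightarrow> real"
  assumes st: "stochastic P" and irr: "irreducible_chain P" and g0: "\<And>z. gen P f z = 0"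
  shows "f y = f z"
proof -
  define M where "M = Max (range f)"
  have Mge: "\<And>y. f y \<le> M" unfolding M_def by simp
  have "M \<in> range f" unfolding M_def by (intro Max_in) auto
  then obtain x0 where x0: "f x0 = M" by auto
  have step: "f w = M" if fz: "f z = M" and pz: "P z w > 0" for z w
  proof -
    have "(\<Sum>w\<in>UNIV. P z w * f w) = M" using g0[of z] fz by (simp add: gen_eq)
    moreover have "(\<Sum>w\<in>UNIV. P z w * M) = M" using st
      by (simp add: stochastic_def sum_distrib_right[symmetric])
    ultimately have "(\<Sum>w\<in>UNIV. P z w * (M - f w)) = 0"
      by (simp add: right_diff_distrib sum_subtractf)
    moreover have "\<And>w. P z w * (M - f w) \<ge> 0" using st Mge
      by (simp add: stochastic_def)
    ultimately have "\<forall>w. P z w * (M - f w) = 0"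
      by (subst (asm) sum_nonneg_eq_0_iff) auto
    then have "P z w * (M - f w) = 0" by blast
    with pz Mge[of w] show ?thesis by simp
  qed
  have ind: "\<forall>y. mpow P n x0 y > 0 \<longrightarrow> f y = M" for n
  proof (induction n)
    case 0 then show ?case using x0 by (auto split: if_splits)
  next
    case (Suc n)
    show ?case
    proof (intro allI impI)
      fix y assume "mpow P (Suc n) x0 y > 0"
      then have "0 < (\<Sum>z\<in>UNIV. mpow P n x0 z * P z y)" by simp
      then obtain z where "mpow P n x0 z * P z y > 0"
      proof -
        assume r: "\<And>z. mpow P n x0 z * P z y > 0 \<Longrightarrow> thesis"
        show thesis
        proof (rule ccontr)
          assume "\<not> thesis"
          then have "\<And>z. mpow P n x0 z * P z y \<le> 0" using r by (meson not_less)
          then have "(\<Sum>z\<in>UNIV. mpow P n x0 z * P z y) \<le> 0" by (intro sum_nonpos) auto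
          with \<open>0 < (\<Sum>z\<in>UNIV. mpow P n x0 z * P z y)\<close> show False by linarith
        qed
      qed
      moreover have "mpow P n x0 z \<ge> 0" "P z y \<ge> 0" using st mpow_nonneg[OF st]
        by (auto simp: stochastic_def)
      ultimately have "mpow P n x0 z > 0" "P z y > 0"
        by (auto simp: zero_less_mult_iff)
      then show "f y = M" using Suc step by blast
    qed
  qed
  have "\<And>y. f y = M" using irr ind unfolding irreducible_chain_def by blast
  then show ?thesis by simp
qed

lemma Hm1_gen:
  fixes P :: "'a::finite \<Rightarrow> 'a \<Rightarrow> real"
  assumes st: "stochastic P" and irr: "irreducible_chain P"
  shows "Hm1_norm P q (gen P g) = ereal (H1_norm P q g)"
proof -
  define g' where "g' = (SOME g'. gen P g' = gen P g)"
  have "gen P g' = gen P g" unfolding g'_def by (rule someI[where x=g]) (rule refl)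
  then have "\<And>z. gen P (\<lambda>x. g' x - g x) z = 0" by (simp add: gen_diff)
  then have "\<And>x y. g' x - g x = g' y - g y" using kernel_const[OF st irr] by blast
  then have "grad g' = grad g"
  proof (intro ext)
    fix x y
    assume H: "\<And>x y. g' x - g x = g' y - g y"
    have "g' x - g x = g' y - g y" by (rule H)
    then show "grad g' x y = grad g x y" unfolding grad_def by linarith
  qed
  then show ?thesis unfolding Hm1_norm_def H1_norm_def g'_def[symmetric] by simp
qed

lemma H1_scale: "H1_norm P q (\<lambda>y. c * f y) = \<bar>c\<bar> * H1_norm P q f"
proof -
  have sq_fact: "\<And>a b d::real. d * (c * a - c * b)\<^sup>2 = c\<^sup>2 * (d * (a - b)\<^sup>2)"
    by (simp add: power2_eq_square algebra_simps)
  have "(\<Sum>(x,y)\<in>edges P. cond P q x y * (grad (\<lambda>y. c * f y) x y)\<^sup>2)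
      = c\<^sup>2 * (\<Sum>(x,y)\<in>edges P. cond P q x y * (grad f x y)\<^sup>2)"
    unfolding sum_distrib_left
    by (intro sum.cong) (auto simp: grad_def sq_fact)
  then show ?thesis unfolding H1_norm_def L2C_norm_def
    by (simp add: real_sqrt_mult)
qed

lemma H1_tendsto:
  assumes "\<And>y. ((\<lambda>h. f h y) \<longlongrightarrow> g y) F"
  shows "((\<lambda>h. H1_norm P q (f h)) \<longlongrightarrow> H1_norm P q g) F"
  unfolding H1_norm_def L2C_norm_def grad_def
  by (intro tendsto_intros tendsto_sum) (auto intro!: tendsto_intros assms)


lemma q_pos:
  fixes P :: "'a::finite \<Rightarrow> 'a \<Rightarrow> real"
  assumes st: "stochastic P" and irr: "irreducible_chain P" and inv: "invariant_distribution P q"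
  shows "q y > 0"
proof -
  have qn: "(\<Sum>x\<in>UNIV. q x * mpow P n x y) = q y" for n y
  proof (induction n arbitrary: y)
    case 0
    have "(\<Sum>x\<in>UNIV. q x * mpow P 0 x y) = (\<Sum>x\<in>UNIV. if x = y then q x else 0)"
      by (intro sum.cong) auto
    then show ?case by simp
  next
    case (Suc n)
    have "(\<Sum>x\<in>UNIV. q x * mpow P (Suc n) x y) = (\<Sum>x\<in>UNIV. \<Sum>z\<in>UNIV. q x * (mpow P n x z * P z y))"
      by (simp add: sum_distrib_left)
    also have "\<dots> = (\<Sum>z\<in>UNIV. \<Sum>x\<in>UNIV. q x * (mpow P n x z * P z y))"
      by (rule sum.swap)
    also have "\<dots> = (\<Sum>z\<in>UNIV. (\<Sum>x\<in>UNIV. q x * mpow P n x z) * P z y)"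
      by (simp add: sum_distrib_right mult.assoc)
    also have "\<dots> = q y" using Suc inv by (simp add: invariant_distribution_def)
    finally show ?case .
  qed
  have "\<exists>x0. q x0 > 0"
  proof (rule ccontr)
    assume "\<not> ?thesis"
    then have "\<forall>x. q x = 0" using inv unfolding invariant_distribution_def by (meson antisym not_less)
    then have "(\<Sum>x\<in>UNIV. q x) = 0" by simp
    then show False using inv by (simp add: invariant_distribution_def)
  qed
  then obtain x0 where x0: "q x0 > 0" by blast
  obtain n where n: "mpow P n x0 y > 0" using irr by (auto simp: irreducible_chain_def)
  have "q x0 * mpow P n x0 y \<le> (\<Sum>x\<in>UNIV. q x * mpow P n x y)"
    by (rule member_le_sum) (use inv mpow_nonneg[OF st] in \<open>auto simp: invariant_distribution_def\<close>)
  then have "q x0 * mpow P n x0 y \<le> q y" using qn by simp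
  moreover have "q x0 * mpow P n x0 y > 0" using x0 n by simp
  ultimately show ?thesis by linarith
qed

lemma main_lim:
  fixes P :: "'a::finite \<Rightarrow> 'a \<Rightarrow> real" and F G :: "real \<Rightarrow> 'a \<Rightarrow> real"
  assumes st: "stochastic P" and irr: "irreducible_chain P" and dpos: "\<delta> > 0"
    and Gc: "\<And>y. continuous_on {t..t+\<delta>} (\<lambda>s. G s y)"
    and Fd: "\<And>s x. s \<in> {t..t+\<delta>} \<Longrightarrow>
        ((\<lambda>u. F u x) has_real_derivative gen P (G s) x) (at s within {t..t+\<delta>})"
  shows "((\<lambda>h. ereal (1/h) * Hm1_norm P q (\<lambda>y. F (t+h) y - F t y))
            \<longlongrightarrow> ereal (H1_norm P q (G t))) (at_right 0)"
proof -
  define I where "I h y = integral {t..t+h} (\<lambda>s. G s y)" for h y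
  have eq: "(\<lambda>y. F (t+h) y - F t y) = gen P (I h)" if h: "h \<in> {0<..\<delta>}" for h
  proof
    fix x
    have sub: "{t..t+h} \<subseteq> {t..t+\<delta>}" using h by auto
    have "((\<lambda>s. gen P (G s) x) has_integral F (t+h) x - F t x) {t..t+h}"
    proof (rule fundamental_theorem_of_calculus)
      show "t \<le> t + h" using h by simp
      fix s assume s: "s \<in> {t..t+h}"
      show "((\<lambda>u. F u x) has_vector_derivative gen P (G s) x) (at s within {t..t+h})"
        using Fd[of s x] s sub
        by (auto simp: has_real_derivative_iff_has_vector_derivative
                 intro: has_vector_derivative_within_subset)
    qed
    moreover have "((\<lambda>s. gen P (G s) x) has_integral gen P (I h) x) {t..t+h}"
      unfolding gen_def I_def
    proof (intro has_integral_sum ballI has_integral_mult_right)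
      fix y
      have "continuous_on {t..t+h} (\<lambda>s. G s y)" using Gc sub by (rule continuous_on_subset)
      then show "((\<lambda>s. G s y) has_integral integral {t..t+h} (\<lambda>s. G s y)) {t..t+h}"
        by (intro integrable_integral integrable_continuous_interval)
    qed simp
    ultimately show "F (t+h) x - F t x = gen P (I h) x" by (rule has_integral_unique)
  qed
  have lim1: "((\<lambda>h. (1/h) * I h y) \<longlongrightarrow> G t y) (at_right 0)" for y
  proof -
    have "((\<lambda>u. integral {t..u} (\<lambda>s. G s y)) has_vector_derivative G t y) (at t within {t..t+\<delta>})"
      using Gc dpos by (intro integral_has_vector_derivative) auto
    then have "((\<lambda>u. integral {t..u} (\<lambda>s. G s y)) has_field_derivative G t y) (at_right t)"
      using dpos by (simp add: has_real_derivative_iff_has_vector_derivative at_within_Icc_at_right)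
    then have "((\<lambda>u. (integral {t..u} (\<lambda>s. G s y) - integral {t..t} (\<lambda>s. G s y)) / (u - t)) \<longlongrightarrow> G t y) (at_right t)"
      by (simp add: has_field_derivative_iff)
    then have "((\<lambda>h. (integral {t..h+t} (\<lambda>s. G s y) - integral {t..t} (\<lambda>s. G s y)) / (h + t - t)) \<longlongrightarrow> G t y) (at_right 0)"
      unfolding at_right_to_0[of t] filterlim_filtermap .
    then show ?thesis by (simp add: I_def add.commute)
  qed
  have ev: "eventually (\<lambda>h. ereal (H1_norm P q (\<lambda>y. (1/h) * I h y)) =
       ereal (1/h) * Hm1_norm P q (\<lambda>y. F (t+h) y - F t y)) (at_right 0)"
  proof -
    have "eventually (\<lambda>h. h \<in> {0<..\<delta>}) (at_right (0::real))"
      using dpos by (simp add: eventually_at_right_field) (metis greaterThanAtMost_iff less_eq_real_def)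
    then show ?thesis
    proof (rule eventually_mono)
      fix h :: real assume h: "h \<in> {0<..\<delta>}"
      then show "ereal (H1_norm P q (\<lambda>y. (1/h) * I h y)) =
       ereal (1/h) * Hm1_norm P q (\<lambda>y. F (t+h) y - F t y)"
      proof -
        have a: "H1_norm P q (\<lambda>y. (1/h) * I h y) = (1/h) * H1_norm P q (I h)"
          using h by (subst H1_scale) simp
        show ?thesis unfolding eq[OF h] Hm1_gen[OF st irr] a by simp
      qed
    qed
  qed
  have "((\<lambda>h. ereal (H1_norm P q (\<lambda>y. (1/h) * I h y))) \<longlongrightarrow> ereal (H1_norm P q (G t))) (at_right 0)"
    by (intro tendsto_ereal H1_tendsto lim1)
  then show ?thesis using ev by (rule Lim_transform_eventually)
qed

theorem proposition6p5:
  fixes P :: "'a::finite \<Rightarrow> 'a \<Rightarrow> real"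
    and q p0 :: "'a \<Rightarrow> real"
    and p :: "real \<Rightarrow> 'a \<Rightarrow> real"
    and \<psi> l\<psi> :: "real \<Rightarrow> 'a \<Rightarrow> real"
    and t0 \<epsilon> t :: real
  assumes stoch: "stochastic P"
    and irred: "irreducible_chain P"
    and inv: "invariant_distribution P q"
    and db: "\<And>y z. q y * kappa P y z = q z * kappa P z y"
    and p0_pos: "\<And>x. p0 x > 0" and p0_sum: "(\<Sum>x\<in>UNIV. p0 x) = 1"
    and p_init: "p 0 = p0"
    and p_ode: "\<And>s y. s \<ge> 0 \<Longrightarrow>
        ((\<lambda>u. p u y) has_real_derivative (\<Sum>x\<in>UNIV. p s x * kappa P x y)) (at s within {0..})"
    and t0_pos: "t0 > 0" and eps_pos: "\<epsilon> > 0"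
    and psi_cont: "\<And>y. continuous_on {t0..<t0+\<epsilon>} (\<lambda>s. \<psi> s y)"
    and lpsi_init: "\<And>x. l\<psi> t0 x = p t0 x / q x"
    and lpsi_ode: "\<And>s x. s \<in> {t0..<t0+\<epsilon>} \<Longrightarrow>
        ((\<lambda>u. l\<psi> u x) has_real_derivative (\<Sum>y\<in>UNIV. kappa_hat P q x y * \<psi> s y))
          (at s within {t0..<t0+\<epsilon>})"
    and t: "t \<in> {t0..<t0+\<epsilon>}"
  shows "((\<lambda>h. ereal (1/h) * Hm1_norm P q (\<lambda>y. p (t+h) y / q y - p t y / q y))
            \<longlongrightarrow> Hm1_norm P q (gen P (\<lambda>y. p t y / q y))) (at_right 0)
       \<and> Hm1_norm P q (gen P (\<lambda>y. p t y / q y)) = ereal (H1_norm P q (\<lambda>y. p t y / q y))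
       \<and> ((\<lambda>h. ereal (1/h) * Hm1_norm P q (\<lambda>y. l\<psi> (t+h) y - l\<psi> t y))
            \<longlongrightarrow> Hm1_norm P q (gen P (\<psi> t))) (at_right 0)
       \<and> Hm1_norm P q (gen P (\<psi> t)) = ereal (H1_norm P q (\<psi> t))"
proof -
  have qpos: "\<And>y. q y > 0" using q_pos[OF stoch irred inv] .
  have khat: "kappa_hat P q x y = kappa P x y" for x y
    using db[of y x] qpos[of x] by (simp add: kappa_hat_def)
  have tpos: "t > 0" using t t0_pos by auto
  have sub1: "{t..t+1} \<subseteq> {0..}" using tpos by auto
  have pd: "((\<lambda>u. p u y) has_real_derivative (\<Sum>x\<in>UNIV. p s x * kappa P x y)) (at s within {t..t+1})"
    if "s \<in> {t..t+1}" for s y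
    using p_ode[of s y] that sub1 by (auto intro: DERIV_subset)
  have Gc1: "continuous_on {t..t+1} (\<lambda>s. p s y / q y)" for y
  proof -
    have "q y \<noteq> 0" using qpos[of y] by simp
    then show ?thesis by (intro continuous_on_divide continuous_on_const DERIV_continuous_on[OF pd]) auto
  qed
  have deq: "(\<Sum>z\<in>UNIV. p s z * kappa P z x) / q x = gen P (\<lambda>y. p s y / q y) x" for s x
    unfolding gen_def sum_divide_distrib
  proof (intro sum.cong refl)
    fix z
    have "q z * kappa P z x = q x * kappa P x z" by (rule db)
    then show "p s z * kappa P z x / q x = kappa P x z * (p s z / q z)"
      using qpos[of x] qpos[of z] by (simp add: field_simps)
  qed
  have Fd1: "((\<lambda>u. p u x / q x) has_real_derivative gen P (\<lambda>y. p s y / q y) x) (at s within {t..t+1})"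
    if "s \<in> {t..t+1}" for s x
    using DERIV_cdivide[OF pd[OF that, of x], of "q x"] unfolding deq .
  have A: "((\<lambda>h. ereal (1/h) * Hm1_norm P q (\<lambda>y. p (t+h) y / q y - p t y / q y))
            \<longlongrightarrow> ereal (H1_norm P q (\<lambda>y. p t y / q y))) (at_right 0)"
    using main_lim[OF stoch irred, of 1 t "\<lambda>s y. p s y / q y" "\<lambda>u y. p u y / q y" q] Gc1 Fd1 by simp
  define \<delta> where "\<delta> = (t0 + \<epsilon> - t) / 2"
  have dpos: "\<delta> > 0" using t by (simp add: \<delta>_def)
  have sub2: "{t..t+\<delta>} \<subseteq> {t0..<t0+\<epsilon>}" using t by (auto simp: \<delta>_def field_simps)
  have Gc2: "continuous_on {t..t+\<delta>} (\<lambda>s. \<psi> s y)" for y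
    using psi_cont[of y] sub2 by (rule continuous_on_subset)
  have Fd2: "((\<lambda>u. l\<psi> u x) has_real_derivative gen P (\<psi> s) x) (at s within {t..t+\<delta>})"
    if "s \<in> {t..t+\<delta>}" for s x
  proof -
    have "s \<in> {t0..<t0+\<epsilon>}" using that sub2 by blast
    from DERIV_subset[OF lpsi_ode[OF this] sub2] show ?thesis unfolding khat gen_def .
  qed
  have B: "((\<lambda>h. ereal (1/h) * Hm1_norm P q (\<lambda>y. l\<psi> (t+h) y - l\<psi> t y))
            \<longlongrightarrow> ereal (H1_norm P q (\<psi> t))) (at_right 0)"
    using main_lim[OF stoch irred dpos, of t \<psi> l\<psi> q] Gc2 Fd2 by simp
  show ?thesis using A B by (simp add: Hm1_gen[OF stoch irred])
qed

end
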